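(* In the truncated Gale–Shapley algorithm described in the context, with a weight function $w$ respecting the preferences, for every $i\ge 2$ we have $f_i(R)\le f_{i-1}(R)$.
   Context: Instance: a simple bipartite graph $\mathcal{G}=(R\cup B,E)$ (red nodes $R$, blue nodes $B$) without isolated nodes, each node having a linear preference order on its neighbours. Algorithm (distributed Gale–Shapley): each blue $b$ keeps $p(b)$ (current partner or $\bot$), initially $\bot$. Each red $r$ keeps a list $C(r)$, initially all neighbours in decreasing preference; $c(r)$ (candidate awaiting response, or $\bot$), initially $\bot$; $p(r)$ (partner or $\bot$), initially $\bot$. Each round consists of a blue turn then a red turn. Blue turn, for each $b$: let $P$ be the set of neighbours that sent `propose'; if $P=\emptyset$ do nothing. Otherwise let $Q=P\cup\{p(b)\}$ if $p(b)\ne\bot$, else $Q=P$; let $q$ be $b$'s most preferred node in $Q$; if $q\ne p(b)$, send `break' to $p(b)$ (if $p(b)\ne\bot$), send `accept' to $q$, and set $p(b)\gets q$; send `reject' to every $r\in P\setminus\{q\}$. Red turn, for each $r$: (1) if $c(r)\neq\bot$, receive the message from $c(r)$; if `accept' set $p(r)\gets c(r)$; if `reject' remove $c(r)$ from $C(r)$; then set $c(r)\gets\bot$. (2) If $p(r)\ne\bot$ and $p(r)$ sent `break', remove $p(r)$ from $C(r)$ and set $p(r)\gets\bot$. (3) If $p(r)=\bot$ and $C(r)$ is nonempty, set $c(r)$ to the first element of $C(r)$ and send `propose' to it. Notation: a subscript $i$ denotes the value at the end of round $i$. Let $w:E\to\mathbb{Z}_{>0}$ be a weight function respecting preferences: whenever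 a node $v$ prefers $x$ over $y$, $w(\{v,x\})\ge w(\{v,y\})$. The potential of $r\in R$ at the end of round $i$ is $f_i(r)=0$ if $r$ is matched ($p_i(r)\neq\bot$) or $C_i(r)$ is empty, and otherwise $f_i(r)=w(\{r,b\})$ where $b$ is the first element of $C_i(r)$; $f_i(R)=\sum_{r\in R}f_i(r)$. *)

theory Defs
  imports Main
begin

text \<open>The linear preference
order of a node v on its neighbours is given by a list pl v containing every
neighbour exactly once, in decreasing order of preference (first = most preferred).\<close>

definition bipartite_instance ::
  "'v set \<Rightarrow> 'v set \<Rightarrow> ('v \<Rightarrow> 'v \<Rightarrow> bool) \<Rightarrow> ('v \<Rightarrow> 'v list) \<Rightarrow> bool" where
  "bipartite_instance R B adj pl \<longleftrightarrow>
     finite R \<and> finite B \<and> R \<inter> B = {} \<and>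
     (\<forall>x y. adj x y \<longrightarrow> adj y x) \<and>
     (\<forall>x y. adj x y \<longrightarrow> (x \<in> R \<and> y \<in> B) \<or> (x \<in> B \<and> y \<in> R)) \<and>
     (\<forall>v \<in> R \<union> B. \<exists>u. adj v u) \<and>
     (\<forall>v \<in> R \<union> B. distinct (pl v) \<and> set (pl v) = {u. adj v u})"

definition prefers :: "('v \<Rightarrow> 'v list) \<Rightarrow> 'v \<Rightarrow> 'v \<Rightarrow> 'v \<Rightarrow> bool" where
  "prefers pl v x y \<longleftrightarrow>
      (\<exists>i j. i < j \<and> j < length (pl v) \<and> pl v ! i = x \<and> pl v ! j = y)"

definition respects_prefs ::
  "('v \<Rightarrow> 'v \<Rightarrow> bool) \<Rightarrow> ('v \<Rightarrow> 'v list) \<Rightarrow> ('v set \<Rightarrow> int) \<Rightarrow> bool" where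
  "respects_prefs adj pl w \<longleftrightarrow>
     (\<forall>x y. adj x y \<longrightarrow> w {x, y} > 0) \<and>
     (\<forall>v x y. adj v x \<longrightarrow> adj v y \<longrightarrow> prefers pl v x y \<longrightarrow> w {v, x} \<ge> w {v, y})"

datatype msg = Propose | Accept | Reject | Break

text \<open>State at the end of a round: partner p (all nodes), list C and candidate c
(red nodes), and the set of `propose' messages (r, b) sent by red r to blue b
during the red turn of that round.\<close>
record 'v gs_state =
  par :: "'v \<Rightarrow> 'v option"
  cl :: "'v \<Rightarrow> 'v list"
  cand :: "'v \<Rightarrow> 'v option"
  props :: "('v \<times> 'v) set"

definition gs_init :: "('v \<Rightarrow> 'v list) \<Rightarrow> 'v gs_state" where
  "gs_init pl = \<lparr> par = (\<lambda>_. None), cl = pl, cand = (\<lambda>_. None), props = {} \<rparr>"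

definition best :: "('v \<Rightarrow> 'v list) \<Rightarrow> 'v \<Rightarrow> 'v set \<Rightarrow> 'v" where
  "best pl b Q = (THE q. q \<in> Q \<and> (\<forall>q' \<in> Q. q' \<noteq> q \<longrightarrow> prefers pl b q q'))"

definition proposers :: "'v gs_state \<Rightarrow> 'v \<Rightarrow> 'v set" where
  "proposers s b = {r. (r, b) \<in> props s}"

definition bq :: "('v \<Rightarrow> 'v list) \<Rightarrow> 'v gs_state \<Rightarrow> 'v \<Rightarrow> 'v" where
  "bq pl s b = best pl b (proposers s b \<union> set_option (par s b))"

text \<open>Blue turn: new partners of blue nodes and the messages (sender b, receiver r, kind).\<close>
definition blue_par :: "'v set \<Rightarrow> ('v \<Rightarrow> 'v list) \<Rightarrow> 'v gs_state \<Rightarrow> 'v \<Rightarrow> 'v option" where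
  "blue_par B pl s v =
     (if v \<in> B \<and> proposers s v \<noteq> {} \<and> Some (bq pl s v) \<noteq> par s v
      then Some (bq pl s v) else par s v)"

definition blue_msgs :: "'v set \<Rightarrow> ('v \<Rightarrow> 'v list) \<Rightarrow> 'v gs_state \<Rightarrow> ('v \<times> 'v \<times> msg) set" where
  "blue_msgs B pl s =
     {(b, r, Break) | b r. b \<in> B \<and> proposers s b \<noteq> {} \<and> Some (bq pl s b) \<noteq> par s b
                           \<and> par s b = Some r}
   \<union> {(b, r, Accept) | b r. b \<in> B \<and> proposers s b \<noteq> {} \<and> Some (bq pl s b) \<noteq> par s b
                           \<and> r = bq pl s b}
   \<union> {(b, r, Reject) | b r. b \<in> B \<and> proposers s b \<noteq> {} \<and> r \<in> proposers s b - {bq pl s b}}"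

definition red_turn :: "('v \<times> 'v \<times> msg) set \<Rightarrow> 'v \<Rightarrow> 'v option \<Rightarrow> 'v list \<Rightarrow> 'v option
     \<Rightarrow> 'v option \<times> 'v list \<times> 'v option" where
  "red_turn M r p C c =
     (let (p1, C1) = (case c of None \<Rightarrow> (p, C)
                       | Some b \<Rightarrow> (if (b, r, Accept) \<in> M then Some b else p,
                                   if (b, r, Reject) \<in> M then removeAll b C else C));
          (p2, C2) = (case p1 of None \<Rightarrow> (p1, C1)
                       | Some b \<Rightarrow> (if (b, r, Break) \<in> M then (None, removeAll b C1) else (p1, C1)));
          c3 = (if p2 = None \<and> C2 \<noteq> [] then Some (hd C2) else None)
      in (p2, C2, c3))"

definition gs_round :: "'v set \<Rightarrow> 'v set \<Rightarrow> ('v \<Rightarrow> 'v list) \<Rightarrow> 'v gs_state \<Rightarrow> 'v gs_state" where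
  "gs_round R B pl s =
     (let M = blue_msgs B pl s;
          pb = blue_par B pl s;
          rt = (\<lambda>r. red_turn M r (pb r) (cl s r) (cand s r))
      in \<lparr> par = (\<lambda>v. if v \<in> R then fst (rt v) else pb v),
           cl = (\<lambda>v. if v \<in> R then fst (snd (rt v)) else cl s v),
           cand = (\<lambda>v. if v \<in> R then snd (snd (rt v)) else cand s v),
           props = {(r, b). r \<in> R \<and> snd (snd (rt r)) = Some b} \<rparr>)"

text \<open>State at the end of round i (round 0 = initial state).\<close>
primrec gs :: "'v set \<Rightarrow> 'v set \<Rightarrow> ('v \<Rightarrow> 'v list) \<Rightarrow> nat \<Rightarrow> 'v gs_state" where
  "gs R B pl 0 = gs_init pl"
| "gs R B pl (Suc i) = gs_round R B pl (gs R B pl i)"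

definition pot :: "('v set \<Rightarrow> int) \<Rightarrow> 'v gs_state \<Rightarrow> 'v \<Rightarrow> int" where
  "pot w s r = (if par s r \<noteq> None \<or> cl s r = [] then 0 else w {r, hd (cl s r)})"

definition potR :: "'v set \<Rightarrow> ('v set \<Rightarrow> int) \<Rightarrow> 'v gs_state \<Rightarrow> int" where
  "potR R w s = (\<Sum>r\<in>R. pot w s r)"

end

theory Submission
  imports Defs
begin


lemma rt_filter: "\<exists>Q. fst (snd (red_turn M r p (filter P L) c)) = filter Q L"
  unfolding red_turn_def Let_def
  by (auto split: option.splits prod.splits if_splits simp: removeAll_filter_not_eq filter_filter)

lemma rt_c3: "snd (snd (red_turn M r p C c)) = (if fst (red_turn M r p C c) = None \<and> fst (snd (red_turn M r p C c)) \<noteq> [] then Some (hd (fst (snd (red_turn M r p C c)))) else None)"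
  unfolding red_turn_def Let_def by (auto split: option.splits prod.splits if_splits)

lemma rt_a_acc: "(b,r,Accept)\<in>M \<Longrightarrow> (b,r,Reject)\<notin>M \<Longrightarrow> (b,r,Break)\<notin>M \<Longrightarrow> fst (red_turn M r None C (Some b)) = Some b"
  unfolding red_turn_def Let_def by (auto split: option.splits prod.splits if_splits)

lemma rt_a_nacc: "(b,r,Accept)\<notin>M \<Longrightarrow> fst (red_turn M r None C (Some b)) = None \<and> fst (snd (red_turn M r None C (Some b))) \<in> {C, removeAll b C}"
  unfolding red_turn_def Let_def by (auto split: option.splits prod.splits if_splits)

lemma rt_nc: "red_turn M r p C None = (if p \<noteq> None \<and> (the p, r, Break) \<in> M then (None, removeAll (the p) C, if removeAll (the p) C \<noteq> [] then Some (hd (removeAll (the p) C)) else None) else (p, C, if p = None \<and> C \<noteq> [] then Some (hd C) else None))"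
  unfolding red_turn_def Let_def by (auto split: option.splits prod.splits if_splits)

lemma rt_par_some: "fst (red_turn M r p C c) = Some b \<Longrightarrow> (c \<noteq> None \<Longrightarrow> p = None) \<Longrightarrow> ((b,r,Accept)\<in>M \<Longrightarrow> (b,r,Reject)\<notin>M) \<Longrightarrow>
   (c = Some b \<and> fst (snd (red_turn M r p C c)) = C) \<or> (c = None \<and> p = Some b \<and> fst (snd (red_turn M r p C c)) = C)"
  unfolding red_turn_def Let_def by (auto split: option.splits prod.splits if_splits)


lemma prefers_filter_hd:
  assumes "distinct xs" "filter P xs \<noteq> []" "y \<in> set (filter P xs)" "y \<noteq> hd (filter P xs)"
  shows "\<exists>i j. i < j \<and> j < length xs \<and> xs ! i = hd (filter P xs) \<and> xs ! j = y"
  using assms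
proof (induction xs)
  case Nil then show ?case by simp
next
  case (Cons x xs)
  show ?case
  proof (cases "P x")
    case True
    then have hd: "hd (filter P (x#xs)) = x" by simp
    from Cons.prems(3,4) True have "y \<in> set xs" by (auto simp: hd)
    then obtain j where "j < length xs" "xs ! j = y" by (auto simp: in_set_conv_nth)
    then show ?thesis using hd by (intro exI[of _ 0] exI[of _ "Suc j"]) auto
  next
    case False
    then have "filter P (x#xs) = filter P xs" by simp
    with Cons.prems have "\<exists>i j. i < j \<and> j < length xs \<and> xs ! i = hd (filter P xs) \<and> xs ! j = y"
      by (intro Cons.IH) auto
    then obtain i j where "i < j \<and> j < length xs \<and> xs ! i = hd (filter P xs) \<and> xs ! j = y" by blast
    then show ?thesis using False by (intro exI[of _ "Suc i"] exI[of _ "Suc j"]) auto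
  qed
qed

lemma best_prop:
  assumes "distinct (pl b)" "Q \<subseteq> set (pl b)" "Q \<noteq> {}"
  shows "best pl b Q \<in> Q \<and> (\<forall>q'\<in>Q. q' \<noteq> best pl b Q \<longrightarrow> prefers pl b (best pl b Q) q')"
proof -
  define I where "I = {i. i < length (pl b) \<and> pl b ! i \<in> Q}"
  have "I \<noteq> {}" using assms(2,3) unfolding I_def by (metis (mono_tags, lifting) empty_Collect_eq in_set_conv_nth subset_iff ex_in_conv)
  have fin: "finite I" by (auto simp: I_def)
  define m where "m = Min I"
  have mI: "m \<in> I" using fin \<open>I \<noteq> {}\<close> by (simp add: m_def)
  define q where "q = pl b ! m"
  have P: "q \<in> Q \<and> (\<forall>q'\<in>Q. q' \<noteq> q \<longrightarrow> prefers pl b q q')"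
  proof (intro conjI ballI impI)
    show "q \<in> Q" using mI by (simp add: I_def q_def)
    fix q' assume "q' \<in> Q" "q' \<noteq> q"
    then obtain j where j: "j < length (pl b)" "pl b ! j = q'" using assms(2) by (metis in_set_conv_nth subsetD)
    then have "j \<in> I" using \<open>q' \<in> Q\<close> by (simp add: I_def)
    then have "m \<le> j" using fin by (simp add: m_def)
    moreover have "m \<noteq> j" using j \<open>q' \<noteq> q\<close> q_def by auto
    ultimately show "prefers pl b q q'" unfolding prefers_def using j q_def
      by (intro exI[of _ m] exI[of _ j]) auto
  qed
  have U: "q2 = q" if "q2 \<in> Q \<and> (\<forall>q'\<in>Q. q' \<noteq> q2 \<longrightarrow> prefers pl b q2 q')" for q2
  proof (rule ccontr)
    assume ne: "q2 \<noteq> q"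
    then have "prefers pl b q q2" "prefers pl b q2 q" using P that by auto
    then obtain i j i' j' where h: "i < j" "j < length (pl b)" "pl b ! i = q" "pl b ! j = q2"
       "i' < j'" "j' < length (pl b)" "pl b ! i' = q2" "pl b ! j' = q" unfolding prefers_def by blast
    then have "i = j'" "j = i'" using assms(1) by (auto simp: nth_eq_iff_index_eq)
    then show False using h by simp
  qed
  have "best pl b Q = q" unfolding best_def proof (rule the_equality)
    show "q \<in> Q \<and> (\<forall>q'\<in>Q. q' \<noteq> q \<longrightarrow> prefers pl b q q')" by (rule P)
  next
    fix x assume "x \<in> Q \<and> (\<forall>q'\<in>Q. q' \<noteq> x \<longrightarrow> prefers pl b x q')"
    then show "x = q" by (rule U)
  qed
  then show ?thesis using P by simp
qed

lemma msgs:
  "(b,r,Accept) \<in> blue_msgs B pl s \<longleftrightarrow> b\<in>B \<and> proposers s b \<noteq> {} \<and> Some (bq pl s b) \<noteq> par s b \<and> r = bq pl s b"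
  "(b,r,Reject) \<in> blue_msgs B pl s \<longleftrightarrow> b\<in>B \<and> proposers s b \<noteq> {} \<and> r \<in> proposers s b \<and> r \<noteq> bq pl s b"
  "(b,r,Break) \<in> blue_msgs B pl s \<longleftrightarrow> b\<in>B \<and> proposers s b \<noteq> {} \<and> Some (bq pl s b) \<noteq> par s b \<and> par s b = Some r"
  unfolding blue_msgs_def by auto

lemma round_red:
  assumes "r \<in> R" "R \<inter> B = {}"
  shows "par (gs_round R B pl s) r = fst (red_turn (blue_msgs B pl s) r (par s r) (cl s r) (cand s r))"
    "cl (gs_round R B pl s) r = fst (snd (red_turn (blue_msgs B pl s) r (par s r) (cl s r) (cand s r)))"
    "cand (gs_round R B pl s) r = snd (snd (red_turn (blue_msgs B pl s) r (par s r) (cl s r) (cand s r)))"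
  using assms unfolding gs_round_def Let_def blue_par_def by auto

lemma round_blue:
  assumes "b \<in> B" "R \<inter> B = {}"
  shows "par (gs_round R B pl s) b = blue_par B pl s b"
  using assms unfolding gs_round_def Let_def by auto

lemma round_props: "props (gs_round R B pl s) = {(r,b). r \<in> R \<and> cand (gs_round R B pl s) r = Some b}"
  unfolding gs_round_def Let_def by auto

definition gs_inv :: "'v set \<Rightarrow> 'v set \<Rightarrow> ('v \<Rightarrow> 'v \<Rightarrow> bool) \<Rightarrow> ('v \<Rightarrow> 'v list) \<Rightarrow> 'v gs_state \<Rightarrow> bool" where
 "gs_inv R B adj pl s \<longleftrightarrow>
   (\<forall>r\<in>R. \<exists>P. cl s r = filter P (pl r)) \<and>
   (\<forall>r\<in>R. \<forall>b. par s r = Some b \<longrightarrow> cl s r \<noteq> [] \<and> hd (cl s r) = b) \<and>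
   (\<forall>r\<in>R. \<forall>b. cand s r = Some b \<longrightarrow> par s r = None \<and> cl s r \<noteq> [] \<and> hd (cl s r) = b) \<and>
   props s = {(r,b). r\<in>R \<and> cand s r = Some b} \<and>
   (\<forall>b\<in>B. \<forall>r. par s b = Some r \<longrightarrow> adj b r)"

lemma Q_sub:
  assumes bi: "bipartite_instance R B adj pl" and inv: "gs_inv R B adj pl s" and b: "b \<in> B"
  shows "proposers s b \<union> set_option (par s b) \<subseteq> set (pl b)"
proof
  fix r assume "r \<in> proposers s b \<union> set_option (par s b)"
  then consider "r \<in> proposers s b" | "par s b = Some r" by auto
  then have "adj b r"
  proof cases
    case 1
    then have r: "r \<in> R" "cand s r = Some b" using inv unfolding gs_inv_def proposers_def by auto
    then have "cl s r \<noteq> [] \<and> hd (cl s r) = b" using inv unfolding gs_inv_def by auto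
    moreover obtain P where "cl s r = filter P (pl r)" using inv r unfolding gs_inv_def by auto
    ultimately have "b \<in> set (pl r)" by (metis filter_is_subset list.set_sel(1) subsetD)
    then have "adj r b" using bi r unfolding bipartite_instance_def by auto
    then show ?thesis using bi unfolding bipartite_instance_def by auto
  next
    case 2 then show ?thesis using inv b unfolding gs_inv_def by auto
  qed
  then show "r \<in> set (pl b)" using bi b unfolding bipartite_instance_def by auto
qed

lemma bq_prop:
  assumes bi: "bipartite_instance R B adj pl" and inv: "gs_inv R B adj pl s" and b: "b \<in> B"
    and ne: "proposers s b \<noteq> {}"
  shows "bq pl s b \<in> proposers s b \<union> set_option (par s b) \<and>
     (\<forall>q'\<in>proposers s b \<union> set_option (par s b). q' \<noteq> bq pl s b \<longrightarrow> prefers pl b (bq pl s b) q')"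
  unfolding bq_def
proof (rule best_prop)
  show "distinct (pl b)" using bi b unfolding bipartite_instance_def by auto
  show "proposers s b \<union> set_option (par s b) \<subseteq> set (pl b)" by (rule Q_sub[OF bi inv b])
  show "proposers s b \<union> set_option (par s b) \<noteq> {}" using ne by simp
qed


lemma inv_init: "gs_inv R B adj pl (gs_init pl)"
  unfolding gs_inv_def gs_init_def by (auto intro: exI[of _ "\<lambda>_. True"])

lemma inv_step:
  assumes bi: "bipartite_instance R B adj pl" and inv: "gs_inv R B adj pl s"
  shows "gs_inv R B adj pl (gs_round R B pl s)"
proof -
  have RB: "R \<inter> B = {}" using bi unfolding bipartite_instance_def by auto
  let ?s = "gs_round R B pl s"
  let ?M = "blue_msgs B pl s"
  have excl: "(b,r,Accept) \<in> ?M \<Longrightarrow> (b,r,Reject) \<notin> ?M" for b r by (simp add: msgs)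
  have 1: "\<forall>r\<in>R. \<exists>P. cl ?s r = filter P (pl r)"
  proof
    fix r assume r: "r \<in> R"
    obtain P where "cl s r = filter P (pl r)" using inv r unfolding gs_inv_def by auto
    then show "\<exists>P. cl ?s r = filter P (pl r)" using round_red(2)[OF r RB] rt_filter by metis
  qed
  have 2: "\<forall>r\<in>R. \<forall>b. par ?s r = Some b \<longrightarrow> cl ?s r \<noteq> [] \<and> hd (cl ?s r) = b"
  proof (intro ballI allI impI)
    fix r b assume r: "r \<in> R" and p: "par ?s r = Some b"
    have cp: "cand s r \<noteq> None \<Longrightarrow> par s r = None" using inv r unfolding gs_inv_def by auto
    from rt_par_some[OF p[unfolded round_red(1)[OF r RB]] cp excl]
    have "(cand s r = Some b \<and> cl ?s r = cl s r) \<or> (cand s r = None \<and> par s r = Some b \<and> cl ?s r = cl s r)"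
      using round_red(2)[OF r RB] by simp
    then show "cl ?s r \<noteq> [] \<and> hd (cl ?s r) = b" using inv r unfolding gs_inv_def by auto
  qed
  have 3: "\<forall>r\<in>R. \<forall>b. cand ?s r = Some b \<longrightarrow> par ?s r = None \<and> cl ?s r \<noteq> [] \<and> hd (cl ?s r) = b"
  proof (intro ballI allI impI)
    fix r b assume r: "r \<in> R" and c: "cand ?s r = Some b"
    then show "par ?s r = None \<and> cl ?s r \<noteq> [] \<and> hd (cl ?s r) = b"
      using round_red[OF r RB] rt_c3[of ?M r "par s r" "cl s r" "cand s r"]
      by (auto split: if_splits)
  qed
  have 5: "\<forall>b\<in>B. \<forall>r. par ?s b = Some r \<longrightarrow> adj b r"
  proof (intro ballI allI impI)
    fix b r assume b: "b \<in> B" and p: "par ?s b = Some r"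
    show "adj b r"
    proof (cases "proposers s b \<noteq> {} \<and> Some (bq pl s b) \<noteq> par s b")
      case True
      then have "r = bq pl s b" using p round_blue[OF b RB] b unfolding blue_par_def by auto
      then have "r \<in> set (pl b)" using bq_prop[OF bi inv b] Q_sub[OF bi inv b] True by blast
      then show ?thesis using bi b unfolding bipartite_instance_def by auto
    next
      case False
      then have "par s b = Some r" using p round_blue[OF b RB] b unfolding blue_par_def by auto
      then show ?thesis using inv b unfolding gs_inv_def by auto
    qed
  qed
  show ?thesis unfolding gs_inv_def using 1 2 3 5 round_props[of R B pl s] by blast
qed

lemma inv_all:
  assumes bi: "bipartite_instance R B adj pl"
  shows "gs_inv R B adj pl (gs R B pl k)"
  by (induction k) (auto intro: inv_init inv_step[OF bi])


lemma w_pos_in: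
  assumes bi: "bipartite_instance R B adj pl" and resp: "respects_prefs adj pl w"
    and r: "r \<in> R" and y: "y \<in> set (pl r)"
  shows "w {r, y} > 0"
  using assms unfolding bipartite_instance_def respects_prefs_def by auto

lemma w_drop:
  assumes bi: "bipartite_instance R B adj pl" and resp: "respects_prefs adj pl w"
    and r: "r \<in> R" and C: "C = filter P (pl r)" "C \<noteq> []" "removeAll (hd C) C \<noteq> []"
  shows "w {r, hd (removeAll (hd C) C)} \<le> w {r, hd C}"
proof -
  define y where "y = hd (removeAll (hd C) C)"
  have "y \<in> set (removeAll (hd C) C)" using C(3) unfolding y_def by (rule list.set_sel(1))
  then have y: "y \<in> set C" "y \<noteq> hd C" by auto
  have d: "distinct (pl r)" and st: "set (pl r) = {u. adj r u}" using bi r unfolding bipartite_instance_def by auto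
  have "prefers pl r (hd C) y" unfolding prefers_def
    using prefers_filter_hd[OF d, of P y] C y by auto
  moreover have "adj r (hd C)" "adj r y" using C(1,2) y(1) st
    by (metis filter_is_subset list.set_sel(1) mem_Collect_eq subsetD)+
  ultimately show ?thesis using resp unfolding respects_prefs_def y_def by auto
qed


lemma round_pot:
  assumes bi: "bipartite_instance R B adj pl" and resp: "respects_prefs adj pl w"
    and inv: "gs_inv R B adj pl s"
    and I6: "\<forall>r\<in>R. cand s r = (if par s r = None \<and> cl s r \<noteq> [] then Some (hd (cl s r)) else None)"
  shows "potR R w (gs_round R B pl s) \<le> potR R w s"
proof -
  have RB: "R \<inter> B = {}" and finR: "finite R" using bi unfolding bipartite_instance_def by auto
  let ?s = "gs_round R B pl s"
  let ?M = "blue_msgs B pl s"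
  let ?rt = "\<lambda>r. red_turn ?M r (par s r) (cl s r) (cand s r)"
  have excl: "(b,r,Accept) \<in> ?M \<Longrightarrow> (b,r,Reject) \<notin> ?M" for b r by (simp add: msgs)
  have excl2: "(b,r,Accept) \<in> ?M \<Longrightarrow> (b,r,Break) \<notin> ?M" for b r by (auto simp add: msgs)
  have filt: "\<exists>P. cl s r = filter P (pl r)" if "r \<in> R" for r using inv that unfolding gs_inv_def by auto
  have hdp: "cl s r \<noteq> [] \<and> hd (cl s r) = x" if "r \<in> R" "par s r = Some x" for r x
    using inv that unfolding gs_inv_def by auto
  have inpl: "hd (cl s r) \<in> set (pl r)" if "r \<in> R" "cl s r \<noteq> []" for r
    using filt[OF that(1)] that(2) by (metis filter_is_subset list.set_sel(1) subsetD)
  have pot': "pot w ?s r = (if fst (?rt r) \<noteq> None \<or> fst (snd (?rt r)) = [] then 0 else w {r, hd (fst (snd (?rt r)))})"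
    if "r \<in> R" for r
    unfolding pot_def using round_red[OF that RB] by simp
  have potge: "0 \<le> pot w s r" if "r \<in> R" for r
    using w_pos_in[OF bi resp that inpl[OF that]] unfolding pot_def by auto
  define Br where "Br = {r\<in>R. \<exists>x. par s r = Some x \<and> (x,r,Break) \<in> ?M}"
  define g where "g r = bq pl s (the (par s r))" for r
  have A: "pot w ?s r \<le> pot w s r" if r: "r \<in> R" "r \<notin> Br" for r
  proof (cases "par s r")
    case (Some x)
    then have "cand s r = None" using I6 r by auto
    moreover have "(x,r,Break) \<notin> ?M" using r Some unfolding Br_def by auto
    ultimately have "fst (?rt r) = Some x" using Some by (simp add: rt_nc)
    then show ?thesis using pot'[OF r(1)] potge[OF r(1)] by simp
  next
    case None
    show ?thesis
    proof (cases "cl s r = []")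
      case True
      then have "cand s r = None" using I6 r by auto
      then have "fst (snd (?rt r)) = []" using True None by (simp add: rt_nc)
      then show ?thesis using pot'[OF r(1)] potge[OF r(1)] by simp
    next
      case False
      define b where "b = hd (cl s r)"
      have c: "cand s r = Some b" using I6 r None False b_def by auto
      have ps: "pot w s r = w {r, b}" using None False b_def unfolding pot_def by simp
      have wp: "w {r, b} > 0" using w_pos_in[OF bi resp r(1) inpl[OF r(1) False]] b_def by simp
      show ?thesis
      proof (cases "(b, r, Accept) \<in> ?M")
        case True
        then have "fst (?rt r) = Some b" using None c rt_a_acc[OF True excl[OF True] excl2[OF True]] by simp
        then show ?thesis using pot'[OF r(1)] ps wp by simp
      next
        case False
        then have h: "fst (?rt r) = None \<and> fst (snd (?rt r)) \<in> {cl s r, removeAll b (cl s r)}"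
          using None c rt_a_nacc[OF False] by simp
        obtain P where P: "cl s r = filter P (pl r)" using filt[OF r(1)] by auto
        have "removeAll b (cl s r) \<noteq> [] \<Longrightarrow> w {r, hd (removeAll b (cl s r))} \<le> w {r, b}"
          using w_drop[OF bi resp r(1) P \<open>cl s r \<noteq> []\<close>] b_def by simp
        then show ?thesis using pot'[OF r(1)] ps wp h \<open>cl s r \<noteq> []\<close> b_def by auto
      qed
    qed
  qed
  have Bfacts: "pot w s r = 0 \<and> pot w ?s r \<le> pot w s (g r) \<and> g r \<in> R \<and> g r \<notin> Br \<and> pot w ?s (g r) = 0
     \<and> cand s (g r) = Some (the (par s r))"
    if rB: "r \<in> Br" for r
  proof -
    obtain x where r: "r \<in> R" and px: "par s r = Some x" and brk: "(x,r,Break) \<in> ?M"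
      using rB unfolding Br_def by auto
    have gx: "g r = bq pl s x" using px g_def by simp
    have m: "x \<in> B" "proposers s x \<noteq> {}" "Some (bq pl s x) \<noteq> par s x" "par s x = Some r"
      using brk unfolding msgs by blast+
    have bqp: "bq pl s x \<in> proposers s x \<union> set_option (par s x) \<and>
     (\<forall>q'\<in>proposers s x \<union> set_option (par s x). q' \<noteq> bq pl s x \<longrightarrow> prefers pl x (bq pl s x) q')"
      using bq_prop[OF bi inv m(1,2)] .
    have ne: "bq pl s x \<noteq> r" using m(3,4) by (metis)
    have inprop: "g r \<in> proposers s x" using bqp ne m(4) gx by auto
    then have gR: "g r \<in> R" and cg: "cand s (g r) = Some x"
      using inv unfolding gs_inv_def proposers_def by auto
    have pg: "par s (g r) = None" and hg: "cl s (g r) \<noteq> []" "hd (cl s (g r)) = x"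
      using inv gR cg unfolding gs_inv_def by auto
    have potg: "pot w s (g r) = w {g r, x}" using pg hg unfolding pot_def by simp
    have pref: "prefers pl x (g r) r" using bqp ne m(4) gx by auto
    have adj1: "adj x r" using inv m(1,4) unfolding gs_inv_def by auto
    have adj2: "adj x (g r)" using Q_sub[OF bi inv m(1)] inprop bi m(1)
      unfolding bipartite_instance_def by auto
    have wle: "w {x, r} \<le> w {x, g r}" using resp adj1 adj2 pref unfolding respects_prefs_def by auto
    have hx: "cl s r \<noteq> []" "hd (cl s r) = x" using hdp[OF r px] by auto
    have cn: "cand s r = None" using I6 r px by auto
    have rt: "fst (?rt r) = None \<and> fst (snd (?rt r)) = removeAll x (cl s r)"
      using cn px brk by (simp add: rt_nc)
    obtain P where P: "cl s r = filter P (pl r)" using filt[OF r] by auto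
    have wx: "w {r, x} > 0" using w_pos_in[OF bi resp r inpl[OF r hx(1)]] hx by simp
    have "removeAll x (cl s r) \<noteq> [] \<Longrightarrow> w {r, hd (removeAll x (cl s r))} \<le> w {r, x}"
      using w_drop[OF bi resp r P hx(1)] hx by simp
    then have p1: "pot w ?s r \<le> w {r, x}" using pot'[OF r] rt wx by auto
    have "{r, x} = {x, r}" "{g r, x} = {x, g r}" by auto
    then have p2: "pot w ?s r \<le> pot w s (g r)" using p1 wle potg by simp
    have p0: "pot w s r = 0" using px unfolding pot_def by simp
    have gnB: "g r \<notin> Br" using pg unfolding Br_def by auto
    have acc: "(x, g r, Accept) \<in> ?M" using m gx by (simp add: msgs)
    have "fst (?rt (g r)) = Some x" using rt_a_acc[OF acc excl[OF acc] excl2[OF acc]] pg cg hg by simp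
    then have "pot w ?s (g r) = 0" using pot'[OF gR] by simp
    then show ?thesis using p0 p2 gR gnB cg px by simp
  qed
  have inj: "inj_on g Br"
  proof
    fix r1 r2 assume h: "r1 \<in> Br" "r2 \<in> Br" "g r1 = g r2"
    then have "Some (the (par s r1)) = Some (the (par s r2))" using Bfacts by metis
    moreover have "par s r1 \<noteq> None" "par s r2 \<noteq> None" using h unfolding Br_def by auto
    ultimately obtain x where x: "par s r1 = Some x" "par s r2 = Some x" by auto
    then have "(x, r1, Break) \<in> ?M" "(x, r2, Break) \<in> ?M" using h unfolding Br_def by auto
    then show "r1 = r2" by (simp add: msgs)
  qed
  define G where "G = g ` Br"
  have BrR: "Br \<subseteq> R" unfolding Br_def by auto
  have GR: "G \<subseteq> R - Br" using Bfacts unfolding G_def by auto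
  have finB: "finite Br" using finR BrR finite_subset by auto
  have s1: "potR R w ?s = sum (pot w ?s) (R - Br - G) + sum (pot w ?s) G + sum (pot w ?s) Br"
    unfolding potR_def using sum.subset_diff[OF BrR finR] sum.subset_diff[OF GR] finR
    by (metis add.commute finite_Diff)
  have "sum (pot w ?s) G = 0" unfolding G_def by (rule sum.neutral) (use Bfacts in blast)
  moreover have "sum (pot w ?s) Br \<le> sum (\<lambda>r. pot w s (g r)) Br"
    using Bfacts by (intro sum_mono) auto
  moreover have "sum (\<lambda>r. pot w s (g r)) Br = sum (pot w s) G"
    unfolding G_def using sum.reindex[OF inj, of "pot w s"] by simp
  moreover have "sum (pot w ?s) (R - Br - G) \<le> sum (pot w s) (R - Br - G)"
    using A by (intro sum_mono) auto
  moreover have "potR R w s = sum (pot w s) (R - Br - G) + sum (pot w s) G + sum (pot w s) Br"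
    unfolding potR_def using sum.subset_diff[OF BrR finR] sum.subset_diff[OF GR] finR
    by (metis add.commute finite_Diff)
  moreover have "sum (pot w s) Br = 0" by (rule sum.neutral) (use Bfacts in blast)
  ultimately show ?thesis using s1 by linarith
qed

lemma I6_round:
  assumes "R \<inter> B = {}"
  shows "\<forall>r\<in>R. cand (gs_round R B pl s) r = (if par (gs_round R B pl s) r = None \<and> cl (gs_round R B pl s) r \<noteq> [] then Some (hd (cl (gs_round R B pl s) r)) else None)"
proof
  fix r assume r: "r \<in> R"
  show "cand (gs_round R B pl s) r = (if par (gs_round R B pl s) r = None \<and> cl (gs_round R B pl s) r \<noteq> [] then Some (hd (cl (gs_round R B pl s) r)) else None)"
    unfolding round_red[OF r assms] by (rule rt_c3)
qed

theorem lemma3: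
  fixes R B :: "'v set" and adj :: "'v \<Rightarrow> 'v \<Rightarrow> bool" and pl :: "'v \<Rightarrow> 'v list"
    and w :: "'v set \<Rightarrow> int" and i :: nat
  assumes "bipartite_instance R B adj pl"
    and "respects_prefs adj pl w"
    and "i \<ge> 2"
  shows "potR R w (gs R B pl i) \<le> potR R w (gs R B pl (i - 1))"
proof -
  obtain k where k: "i = Suc (Suc k)" using assms(3) by (metis add_2_eq_Suc le_Suc_ex)
  have RB: "R \<inter> B = {}" using assms(1) unfolding bipartite_instance_def by auto
  have inv1: "gs_inv R B adj pl (gs R B pl (Suc k))" by (rule inv_all[OF assms(1)])
  have i6: "\<forall>r\<in>R. cand (gs R B pl (Suc k)) r = (if par (gs R B pl (Suc k)) r = None \<and> cl (gs R B pl (Suc k)) r \<noteq> [] then Some (hd (cl (gs R B pl (Suc k)) r)) else None)"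
    using I6_round[OF RB, of pl "gs R B pl k"] by simp
  have "potR R w (gs_round R B pl (gs R B pl (Suc k))) \<le> potR R w (gs R B pl (Suc k))"
    by (rule round_pot[OF assms(1,2) inv1 i6])
  then show ?thesis using k by simp
qed

end
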